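(* Let $\lambda\in P_I^+$, let $w_0^{I,\lambda}$ be the longest element of $W_{I,\lambda}$ and $w_0^I$ the longest element of $W_I$. Then $\widetilde\lambda=w_0^{I,\lambda}\bigl(\lambda-w_0^I\,v(w_0^I\lambda)^{-1}\rho(k)\bigr)$.
   Context: Let $\mathfrak a$ be a Euclidean space with inner product $(\cdot,\cdot)$, $R\subset\mathfrak a^*$ a root system with Weyl group $W$, positive roots $R^+$, simple reflections $S$. Let $P$ be the weight lattice, $P^+$ the dominant weights and $P^-=-P^+$. Let $k=(k_\alpha)_{\alpha\in R}$ be a $W$-invariant multiplicity function and $\rho(k)=\frac12\sum_{\alpha\in R^+}k_\alpha\alpha$. For $\lambda\in P$ let $v(\lambda)$ be the element of minimal length in $W$ with $v(\lambda)\lambda\in P^-$, and set $\widetilde\lambda=\lambda-v(\lambda)^{-1}\rho(k)$. Let $I\subset S$, $W_I$ the parabolic subgroup generated by $I$, $R_I^+$ its positive roots, $P_I^+=\{\lambda\in P:(\lambda,\alpha)\ge0\ \forall\alpha\in R_I^+\}$, and $W_{I,\lambda}$ the stabilizer of $\lambda$ in $W_I$. *)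

theory Defs
  imports "HOL-Analysis.Analysis"
begin

text \<open>We identify the dual space with the Euclidean space itself via the inner product.\<close>

definition refl :: "'a::real_inner \<Rightarrow> 'a \<Rightarrow> 'a" where
  "refl \<alpha> x = x - (2 * (x \<bullet> \<alpha>) / (\<alpha> \<bullet> \<alpha>)) *\<^sub>R \<alpha>"

definition root_system :: "'a::euclidean_space set \<Rightarrow> bool" where
  "root_system R \<longleftrightarrow> finite R \<and> 0 \<notin> R \<and> span R = UNIV \<and>
     (\<forall>\<alpha>\<in>R. \<forall>\<beta>\<in>R. refl \<alpha> \<beta> \<in> R \<and> 2 * (\<beta> \<bullet> \<alpha>) / (\<alpha> \<bullet> \<alpha>) \<in> \<int>)"

text \<open>A positive system is determined by a regular vector \<open>\<xi>\<close>.\<close>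
definition regular :: "'a::euclidean_space set \<Rightarrow> 'a \<Rightarrow> bool" where
  "regular R \<xi> \<longleftrightarrow> (\<forall>\<alpha>\<in>R. \<alpha> \<bullet> \<xi> \<noteq> 0)"

definition pos_roots :: "'a::euclidean_space set \<Rightarrow> 'a \<Rightarrow> 'a set" where
  "pos_roots R \<xi> = {\<alpha>\<in>R. \<alpha> \<bullet> \<xi> > 0}"

definition simple_roots :: "'a::euclidean_space set \<Rightarrow> 'a \<Rightarrow> 'a set" where
  "simple_roots R \<xi> = {\<alpha>\<in>pos_roots R \<xi>.
      \<not> (\<exists>\<beta>\<in>pos_roots R \<xi>. \<exists>\<gamma>\<in>pos_roots R \<xi>. \<alpha> = \<beta> + \<gamma>)}"

text \<open>Group generated by a set of involutions (closure under composition).\<close>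
inductive_set gen_by :: "('a \<Rightarrow> 'a) set \<Rightarrow> ('a \<Rightarrow> 'a) set" for G where
  gen_id: "id \<in> gen_by G"
| gen_step: "g \<in> G \<Longrightarrow> w \<in> gen_by G \<Longrightarrow> g \<circ> w \<in> gen_by G"

definition weyl :: "'a::euclidean_space set \<Rightarrow> ('a \<Rightarrow> 'a) set" where
  "weyl R = gen_by (refl ` R)"

definition wlength :: "'a::euclidean_space set \<Rightarrow> 'a \<Rightarrow> ('a \<Rightarrow> 'a) \<Rightarrow> nat" where
  "wlength R \<xi> w = (LEAST n. \<exists>xs. length xs = n \<and> set xs \<subseteq> simple_roots R \<xi> \<and>
                              w = foldr (\<lambda>\<alpha> f. refl \<alpha> \<circ> f) xs id)"

definition weights :: "'a::euclidean_space set \<Rightarrow> 'a set" where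
  "weights R = {\<mu>. \<forall>\<alpha>\<in>R. 2 * (\<mu> \<bullet> \<alpha>) / (\<alpha> \<bullet> \<alpha>) \<in> \<int>}"

definition dominant :: "'a::euclidean_space set \<Rightarrow> 'a \<Rightarrow> 'a set" where
  "dominant R \<xi> = {\<mu>\<in>weights R. \<forall>\<alpha>\<in>pos_roots R \<xi>. \<mu> \<bullet> \<alpha> \<ge> 0}"

definition antidominant :: "'a::euclidean_space set \<Rightarrow> 'a \<Rightarrow> 'a set" where
  "antidominant R \<xi> = uminus ` dominant R \<xi>"

definition mult_fun :: "'a::euclidean_space set \<Rightarrow> ('a \<Rightarrow> real) \<Rightarrow> bool" where
  "mult_fun R k \<longleftrightarrow> (\<forall>w\<in>weyl R. \<forall>\<alpha>\<in>R. k (w \<alpha>) = k \<alpha>)"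

definition rho :: "'a::euclidean_space set \<Rightarrow> 'a \<Rightarrow> ('a \<Rightarrow> real) \<Rightarrow> 'a" where
  "rho R \<xi> k = (1/2) *\<^sub>R (\<Sum>\<alpha>\<in>pos_roots R \<xi>. k \<alpha> *\<^sub>R \<alpha>)"

definition vmin :: "'a::euclidean_space set \<Rightarrow> 'a \<Rightarrow> 'a \<Rightarrow> ('a \<Rightarrow> 'a)" where
  "vmin R \<xi> \<mu> = (SOME v. v \<in> weyl R \<and> v \<mu> \<in> antidominant R \<xi> \<and>
      (\<forall>u\<in>weyl R. u \<mu> \<in> antidominant R \<xi> \<longrightarrow> wlength R \<xi> v \<le> wlength R \<xi> u))"

definition lam_tilde :: "'a::euclidean_space set \<Rightarrow> 'a \<Rightarrow> ('a \<Rightarrow> real) \<Rightarrow> 'a \<Rightarrow> 'a" where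
  "lam_tilde R \<xi> k \<mu> = \<mu> - inv (vmin R \<xi> \<mu>) (rho R \<xi> k)"

definition parabolic :: "'a::euclidean_space set \<Rightarrow> ('a \<Rightarrow> 'a) set" where
  "parabolic I = gen_by (refl ` I)"

definition pos_roots_I :: "'a::euclidean_space set \<Rightarrow> 'a \<Rightarrow> 'a set \<Rightarrow> 'a set" where
  "pos_roots_I R \<xi> I = pos_roots R \<xi> \<inter> span I"

definition dominant_I :: "'a::euclidean_space set \<Rightarrow> 'a \<Rightarrow> 'a set \<Rightarrow> 'a set" where
  "dominant_I R \<xi> I = {\<mu>\<in>weights R. \<forall>\<alpha>\<in>pos_roots_I R \<xi> I. \<mu> \<bullet> \<alpha> \<ge> 0}"

definition stab_I :: "'a::euclidean_space set \<Rightarrow> 'a \<Rightarrow> ('a \<Rightarrow> 'a) set" where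
  "stab_I I \<mu> = {w\<in>parabolic I. w \<mu> = \<mu>}"

definition longest :: "'a::euclidean_space set \<Rightarrow> 'a \<Rightarrow> ('a \<Rightarrow> 'a) set \<Rightarrow> ('a \<Rightarrow> 'a)" where
  "longest R \<xi> A = (SOME w. w \<in> A \<and> (\<forall>u\<in>A. wlength R \<xi> u \<le> wlength R \<xi> w))"

end

theory Submission
  imports Defs
begin



lemma refl_add: "refl a (x + y) = refl a x + refl a y"
  by (simp add: refl_def inner_add_left add_divide_distrib scaleR_add_left algebra_simps)

lemma refl_scale: "refl a (c *\<^sub>R x) = c *\<^sub>R refl a x"
  by (simp add: refl_def algebra_simps)

lemma linear_refl: "linear (refl a)"
  by (rule linearI) (simp_all add: refl_add refl_scale)

lemma refl_inner: "a \<noteq> 0 \<Longrightarrow> refl a x \<bullet> refl a y = x \<bullet> y"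
  by (simp add: refl_def inner_diff_left inner_diff_right algebra_simps power2_eq_square) (simp add: field_simps inner_commute)

lemma refl_refl: "a \<noteq> 0 \<Longrightarrow> refl a (refl a x) = x"
  by (simp add: refl_def inner_diff_left algebra_simps)

lemma refl_self: "a \<noteq> 0 \<Longrightarrow> refl a a = - a"
  by (simp add: refl_def algebra_simps scaleR_2)

lemma refl_scaled: "c \<noteq> 0 \<Longrightarrow> refl (c *\<^sub>R a) = refl a"
  by (rule ext) (simp add: refl_def field_simps)

lemma refl_conj:
  assumes "linear w" "\<And>x y. w x \<bullet> w y = x \<bullet> y"
  shows "w (refl a x) = refl (w a) (w x)"
  using assms by (simp add: refl_def linear_diff linear_cmul)




lemma gen_comp: "a \<in> gen_by G \<Longrightarrow> b \<in> gen_by G \<Longrightarrow> a \<circ> b \<in> gen_by G"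
  by (induction rule: gen_by.induct) (auto simp: comp_assoc intro: gen_by.intros)

lemma gen_single: "g \<in> G \<Longrightarrow> g \<in> gen_by G"
  using gen_by.gen_step[OF _ gen_by.gen_id] by fastforce

lemma gen_mono: "G \<subseteq> H \<Longrightarrow> gen_by G \<subseteq> gen_by H"
proof
  fix w assume "w \<in> gen_by G"
  then show "w \<in> gen_by H" if "G \<subseteq> H" using that
    by (induction rule: gen_by.induct) (auto intro: gen_by.intros)
qed

definition prodr :: "'a::real_inner list \<Rightarrow> 'a \<Rightarrow> 'a" where
  "prodr xs = foldr (\<lambda>\<alpha> f. refl \<alpha> \<circ> f) xs id"

lemma prodr_simps[simp]: "prodr [] = id" "prodr (x # xs) = refl x \<circ> prodr xs"
  by (simp_all add: prodr_def)

lemma prodr_append: "prodr (xs @ ys) = prodr xs \<circ> prodr ys"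
  by (induction xs) (simp_all add: comp_assoc)

lemma prodr_gen: "set xs \<subseteq> S \<Longrightarrow> prodr xs \<in> gen_by (refl ` S)"
  by (induction xs) (auto intro: gen_by.intros)

lemma gen_prodr: "w \<in> gen_by (refl ` S) \<Longrightarrow> \<exists>xs. set xs \<subseteq> S \<and> w = prodr xs"
proof (induction rule: gen_by.induct)
  case gen_id then show ?case by (intro exI[of _ "[]"]) simp
next
  case (gen_step g w)
  then obtain a xs where "a \<in> S" "g = refl a" "set xs \<subseteq> S" "w = prodr xs" by auto
  then show ?case by (intro exI[of _ "a # xs"]) simp
qed

lemma prodr_rev: "0 \<notin> set xs \<Longrightarrow> prodr (rev xs) \<circ> prodr xs = id"
proof (induction xs)
  case Nil then show ?case by simp
next
  case (Cons x xs)
  then have "x \<noteq> 0" by auto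
  have "prodr (rev (x # xs)) \<circ> prodr (x # xs) = prodr (rev xs) \<circ> (refl x \<circ> refl x) \<circ> prodr xs"
    by (simp add: prodr_append comp_assoc)
  also have "refl x \<circ> refl x = id" using \<open>x \<noteq> 0\<close> by (auto simp: refl_refl)
  finally show ?case using Cons by simp
qed

definition orth :: "('a::real_inner \<Rightarrow> 'a) \<Rightarrow> bool" where
  "orth w \<longleftrightarrow> linear w \<and> (\<forall>x y. w x \<bullet> w y = x \<bullet> y)"

lemma gen_orth: "w \<in> gen_by (refl ` S) \<Longrightarrow> 0 \<notin> S \<Longrightarrow> orth w"
proof (induction rule: gen_by.induct)
  case gen_id then show ?case by (simp add: orth_def linear_id[unfolded id_def])
next
  case (gen_step g w)
  then obtain a where a: "a \<in> S" "g = refl a" by auto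
  with gen_step have "a \<noteq> 0" by auto
  have "linear (refl a \<circ> w)" using gen_step by (intro linear_compose linear_refl) (auto simp: orth_def)
  then show ?case using gen_step a \<open>a \<noteq> 0\<close>
    by (auto simp: orth_def refl_inner comp_def)
qed

lemma gen_inv: "w \<in> gen_by (refl ` S) \<Longrightarrow> 0 \<notin> S \<Longrightarrow>
   \<exists>w'\<in>gen_by (refl ` S). w' \<circ> w = id \<and> w \<circ> w' = id"
proof (induction rule: gen_by.induct)
  case gen_id then show ?case by (intro bexI[of _ id]) (auto intro: gen_by.gen_id)
next
  case (gen_step g w)
  then obtain a where a: "a \<in> S" "g = refl a" by auto
  with gen_step have "a \<noteq> 0" by auto
  from gen_step.IH gen_step.prems obtain w' where w': "w' \<in> gen_by (refl ` S)" "w' \<circ> w = id" "w \<circ> w' = id" by blast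
  have rr: "refl a \<circ> refl a = id" using \<open>a \<noteq> 0\<close> by (auto simp: refl_refl)
  have "w' \<circ> g \<in> gen_by (refl ` S)" using w' a by (auto intro: gen_comp gen_single)
  moreover have "(w' \<circ> g) \<circ> (g \<circ> w) = id" using w' rr a
    by (metis comp_assoc comp_id)
  moreover have "(g \<circ> w) \<circ> (w' \<circ> g) = id" using w' rr a
    by (metis comp_assoc comp_id)
  ultimately show ?case by blast
qed

lemma gen_bij: "w \<in> gen_by (refl ` S) \<Longrightarrow> 0 \<notin> S \<Longrightarrow> bij w"
  using gen_inv by (metis o_bij)

lemma gen_inv_eq: "w \<in> gen_by (refl ` S) \<Longrightarrow> 0 \<notin> S \<Longrightarrow>
   inv w \<in> gen_by (refl ` S) \<and> inv w \<circ> w = id \<and> w \<circ> inv w = id"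
  using gen_inv inv_unique_comp by metis




lemma int_ge2: "(x::real) \<in> \<int> \<Longrightarrow> x > 0 \<Longrightarrow> x \<noteq> 1 \<Longrightarrow> x \<ge> 2"
  by (elim Ints_cases) simp

locale rs =
  fixes R :: "'a::euclidean_space set" and \<xi> :: 'a
  assumes rs: "root_system R" and reg: "regular R \<xi>"
begin

abbreviation "Rp \<equiv> pos_roots R \<xi>"
abbreviation "D \<equiv> simple_roots R \<xi>"

lemma finR: "finite R" and zero_notin: "0 \<notin> R" and spanR: "span R = UNIV"
  using rs by (auto simp: root_system_def)

lemma refl_in: "a \<in> R \<Longrightarrow> b \<in> R \<Longrightarrow> refl a b \<in> R"
  and intR: "a \<in> R \<Longrightarrow> b \<in> R \<Longrightarrow> 2 * (b \<bullet> a) / (a \<bullet> a) \<in> \<int>"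
  using rs by (auto simp: root_system_def)

lemma nz: "a \<in> R \<Longrightarrow> a \<noteq> 0" using zero_notin by auto

lemma neg_in: "b \<in> R \<Longrightarrow> - b \<in> R"
  using refl_in[of b b] refl_self[OF nz] by auto

lemma regR: "b \<in> R \<Longrightarrow> b \<bullet> \<xi> \<noteq> 0"
  using reg by (auto simp: regular_def)

lemma Rp_iff: "b \<in> Rp \<longleftrightarrow> b \<in> R \<and> b \<bullet> \<xi> > 0"
  by (auto simp: pos_roots_def)

lemma D_Rp: "D \<subseteq> Rp" by (auto simp: simple_roots_def)
lemma D_R: "D \<subseteq> R" using D_Rp by (auto simp: Rp_iff)
lemma finD: "finite D" using finR D_R finite_subset by blast
lemma finRp: "finite Rp" using finR by (auto simp: pos_roots_def)

lemma neg_Rp: "b \<in> R \<Longrightarrow> b \<notin> Rp \<Longrightarrow> - b \<in> Rp"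
  using regR[of b] neg_in[of b] by (auto simp: Rp_iff)

lemma R_neg: "b \<in> R \<Longrightarrow> b \<notin> Rp \<longleftrightarrow> b \<bullet> \<xi> < 0"
  using regR[of b] by (auto simp: Rp_iff)

lemma card_less: "b \<in> R \<Longrightarrow> b \<bullet> \<xi> < c \<bullet> \<xi> \<Longrightarrow>
    card {g\<in>R. g \<bullet> \<xi> < b \<bullet> \<xi>} < card {g\<in>R. g \<bullet> \<xi> < c \<bullet> \<xi>}"
  by (rule psubset_card_mono) (auto simp: finR)

lemma decomp: "\<beta> \<in> Rp \<Longrightarrow> \<exists>m. (\<forall>g\<in>D. 0 \<le> m g) \<and> \<beta> = (\<Sum>g\<in>D. m g *\<^sub>R g)"
proof (induction \<beta> rule: measure_induct_rule[where f="\<lambda>\<beta>. card {g\<in>R. g \<bullet> \<xi> < \<beta> \<bullet> \<xi>}"])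
  case (less \<beta>)
  show ?case
  proof (cases "\<beta> \<in> D")
    case True
    have "(\<Sum>g\<in>D. (if g = \<beta> then 1 else 0) *\<^sub>R g) = (\<Sum>g\<in>D. if g = \<beta> then \<beta> else 0)"
      by (rule sum.cong) auto
    also have "\<dots> = \<beta>" using True finD by (simp add: sum.delta')
    finally show ?thesis by (intro exI[of _ "\<lambda>g. if g = \<beta> then 1 else 0"]) auto
  next
    case False
    then obtain b1 b2 where b: "b1 \<in> Rp" "b2 \<in> Rp" "\<beta> = b1 + b2" using less.prems
      by (auto simp: simple_roots_def)
    have "b1 \<bullet> \<xi> < \<beta> \<bullet> \<xi>" "b2 \<bullet> \<xi> < \<beta> \<bullet> \<xi>" using b by (auto simp: Rp_iff inner_add_left)
    with b have "card {g\<in>R. g \<bullet> \<xi> < b1 \<bullet> \<xi>} < card {g\<in>R. g \<bullet> \<xi> < \<beta> \<bullet> \<xi>}"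
       "card {g\<in>R. g \<bullet> \<xi> < b2 \<bullet> \<xi>} < card {g\<in>R. g \<bullet> \<xi> < \<beta> \<bullet> \<xi>}"
      by (auto intro!: card_less simp: Rp_iff)
    with less.IH b obtain m1 m2 where
      m1: "\<forall>g\<in>D. 0 \<le> m1 g" "b1 = (\<Sum>g\<in>D. m1 g *\<^sub>R g)" and
      m2: "\<forall>g\<in>D. 0 \<le> m2 g" "b2 = (\<Sum>g\<in>D. m2 g *\<^sub>R g)" by meson
    show ?thesis
      by (intro exI[of _ "\<lambda>g. m1 g + m2 g"])
         (simp add: m1 m2 b scaleR_add_left sum.distrib)
  qed
qed

lemma obtuse: assumes "a \<in> D" "b \<in> D" "a \<noteq> b" shows "a \<bullet> b \<le> 0"
proof (rule ccontr)
  assume "\<not> a \<bullet> b \<le> 0"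
  then have ab: "a \<bullet> b > 0" by simp
  have aR: "a \<in> R" and bR: "b \<in> R" using assms D_R by auto
  have aa: "a \<bullet> a > 0" and bb: "b \<bullet> b > 0" using nz[OF aR] nz[OF bR] by auto
  define p where "p = 2 * (a \<bullet> b) / (b \<bullet> b)"
  define q where "q = 2 * (a \<bullet> b) / (a \<bullet> a)"
  have pI: "p \<in> \<int>" using intR[OF bR aR] by (simp add: p_def)
  have qI: "q \<in> \<int>" using intR[OF aR bR] by (simp add: q_def inner_commute)
  have pp: "p > 0" "q > 0" using ab aa bb by (auto simp: p_def q_def)
  have diff: "a - b \<in> R"
  proof -
    consider "p = 1" | "q = 1" | "p \<ge> 2" "q \<ge> 2" using int_ge2 pI qI pp by blast
    then show ?thesis
    proof cases
      case 1
      then have "refl b a = a - b" by (simp add: refl_def p_def[symmetric])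
      then show ?thesis using refl_in[OF bR aR] by simp
    next
      case 2
      then have "refl a b = b - a" by (simp add: refl_def q_def[symmetric] inner_commute)
      then show ?thesis using neg_in[OF refl_in[OF aR bR]] by simp
    next
      case 3
      then have "a \<bullet> b \<ge> b \<bullet> b" "a \<bullet> b \<ge> a \<bullet> a" using aa bb
        by (auto simp: p_def q_def field_simps)
      then have "(a - b) \<bullet> (a - b) \<le> 0"
        by (simp add: inner_diff_left inner_diff_right inner_commute)
      then have "a = b" by (metis antisym inner_ge_zero inner_eq_zero_iff eq_iff_diff_eq_0)
      with assms show ?thesis by simp
    qed
  qed
  have "a - b \<noteq> 0" using assms by simp
  show False
  proof (cases "a - b \<in> Rp")
    case True
    then have "a = (a - b) + b" "b \<in> Rp" using assms D_Rp by auto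
    with True assms(1) show False unfolding simple_roots_def by blast
  next
    case False
    then have "b - a \<in> Rp" using neg_Rp[OF diff] by simp
    moreover have "b = (b - a) + a" "a \<in> Rp" using assms D_Rp by auto
    ultimately show False using assms(2) unfolding simple_roots_def by blast
  qed
qed

end


context rs begin

lemma D_pos: "g \<in> D \<Longrightarrow> g \<bullet> \<xi> > 0" using D_Rp by (auto simp: Rp_iff)

lemma indep: assumes "(\<Sum>g\<in>D. c g *\<^sub>R g) = 0" "g0 \<in> D" shows "c g0 = 0"
proof -
  define P where "P = {g\<in>D. c g > 0}"
  define N where "N = {g\<in>D. c g < 0}"
  define x where "x = (\<Sum>g\<in>P. c g *\<^sub>R g)"
  define y where "y = (\<Sum>g\<in>N. (- c g) *\<^sub>R g)"
  have fP: "finite P" and fN: "finite N" using finD by (auto simp: P_def N_def)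
  have "(\<Sum>g\<in>D. c g *\<^sub>R g) = (\<Sum>g\<in>D. (if c g > 0 then c g *\<^sub>R g else 0) + (if c g < 0 then c g *\<^sub>R g else 0))"
    by (rule sum.cong) auto
  also have "\<dots> = (\<Sum>g\<in>D. if c g > 0 then c g *\<^sub>R g else 0) + (\<Sum>g\<in>D. if c g < 0 then c g *\<^sub>R g else 0)"
    by (rule sum.distrib)
  also have "\<dots> = x - y"
    using finD by (simp add: sum.inter_filter x_def y_def P_def N_def sum_negf)
  finally have xy: "x = y" using assms(1) by simp
  have xh: "x \<bullet> h \<le> 0" if "h \<in> N" for h
  proof -
    have "x \<bullet> h = (\<Sum>g\<in>P. c g * (g \<bullet> h))" by (simp add: x_def inner_sum_left)
    also have "\<dots> \<le> 0"
    proof (intro sum_nonpos)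
      fix g assume "g \<in> P"
      then have "g \<in> D" "h \<in> D" "g \<noteq> h" "c g > 0" using that by (auto simp: P_def N_def)
      then show "c g * (g \<bullet> h) \<le> 0" using obtuse[of g h] by (simp add: mult_nonneg_nonpos)
    qed
    finally show ?thesis .
  qed
  have "x \<bullet> y = (\<Sum>h\<in>N. (- c h) * (x \<bullet> h))" by (simp add: y_def inner_sum_right)
  also have "\<dots> \<le> 0"
  proof (intro sum_nonpos)
    fix h assume "h \<in> N"
    then show "(- c h) * (x \<bullet> h) \<le> 0" using xh[of h] by (auto simp: N_def intro: mult_nonpos_nonpos)
  qed
  finally have "x = 0" using xy by (metis antisym inner_ge_zero inner_eq_zero_iff)
  then have y0: "y = 0" using xy by simp
  have "P = {}"
  proof (rule ccontr)
    assume "P \<noteq> {}"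
    have "x \<bullet> \<xi> = (\<Sum>g\<in>P. c g * (g \<bullet> \<xi>))" by (simp add: x_def inner_sum_left)
    also have "\<dots> > 0"
      using fP \<open>P \<noteq> {}\<close> D_pos by (intro sum_pos) (auto simp: P_def)
    finally show False using \<open>x = 0\<close> by simp
  qed
  moreover have "N = {}"
  proof (rule ccontr)
    assume "N \<noteq> {}"
    have "y \<bullet> \<xi> = (\<Sum>g\<in>N. (- c g) * (g \<bullet> \<xi>))" by (simp add: y_def inner_sum_left)
    also have "\<dots> > 0"
      using fN \<open>N \<noteq> {}\<close> D_pos by (intro sum_pos) (auto simp: N_def mult_neg_pos)
    finally show False using y0 by simp
  qed
  ultimately have "\<not> c g0 > 0" "\<not> c g0 < 0" using assms(2) by (auto simp: P_def N_def)
  then show ?thesis by linarith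
qed

lemma sum_delta_scale: "a \<in> D \<Longrightarrow> (\<Sum>g\<in>D. (if g = a then n else 0) *\<^sub>R g) = n *\<^sub>R a"
proof -
  assume a: "a \<in> D"
  have "(\<Sum>g\<in>D. (if g = a then n else 0) *\<^sub>R g) = (\<Sum>g\<in>D. if g = a then n *\<^sub>R a else 0)"
    by (rule sum.cong) auto
  also have "\<dots> = n *\<^sub>R a" using a finD by (simp add: sum.delta')
  finally show ?thesis .
qed

lemma refl_Rp: assumes "a \<in> D" "\<beta> \<in> Rp" "refl a \<beta> \<notin> Rp" shows "\<exists>c. \<beta> = c *\<^sub>R a"
proof -
  have aR: "a \<in> R" and bR: "\<beta> \<in> R" using assms D_R by (auto simp: Rp_iff)
  define n where "n = 2 * (\<beta> \<bullet> a) / (a \<bullet> a)"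
  have rb: "refl a \<beta> = \<beta> - n *\<^sub>R a" by (simp add: refl_def n_def)
  have "- refl a \<beta> \<in> Rp" using neg_Rp[OF refl_in[OF aR bR]] assms by simp
  from decomp[OF this] obtain m' where m': "\<forall>g\<in>D. 0 \<le> m' g" "- refl a \<beta> = (\<Sum>g\<in>D. m' g *\<^sub>R g)" by blast
  from decomp[OF assms(2)] obtain m where m: "\<forall>g\<in>D. 0 \<le> m g" "\<beta> = (\<Sum>g\<in>D. m g *\<^sub>R g)" by blast
  have "(\<Sum>g\<in>D. (m g + m' g - (if g = a then n else 0)) *\<^sub>R g)
      = (\<Sum>g\<in>D. m g *\<^sub>R g) + (\<Sum>g\<in>D. m' g *\<^sub>R g) - (\<Sum>g\<in>D. (if g = a then n else 0) *\<^sub>R g)"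
    by (simp add: scaleR_add_left scaleR_diff_left sum.distrib sum_subtractf)
  also have "\<dots> = 0"
  proof -
    have e1: "(\<Sum>g\<in>D. m' g *\<^sub>R g) = n *\<^sub>R a - \<beta>" using m'(2) rb by simp
    show ?thesis unfolding e1 m(2)[symmetric] sum_delta_scale[OF assms(1)] by simp
  qed
  finally have z: "(\<Sum>g\<in>D. (m g + m' g - (if g = a then n else 0)) *\<^sub>R g) = 0" .
  have mz: "m g = 0" if "g \<in> D" "g \<noteq> a" for g
  proof -
    have "0 \<le> m g" "0 \<le> m' g" using that m(1) m'(1) by auto
    moreover have "m g + m' g = 0" using indep[OF z that(1)] that(2) by simp
    ultimately show ?thesis by linarith
  qed
  have "\<beta> = (\<Sum>g\<in>D. (if g = a then m a else 0) *\<^sub>R g)"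
    unfolding m(2) by (rule sum.cong) (auto simp: mz)
  then show ?thesis using sum_delta_scale[OF assms(1)] by auto
qed

lemma span_decomp:
  assumes I: "I \<subseteq> D" and b: "\<beta> \<in> Rp" "\<beta> \<in> span I"
  shows "\<exists>m. (\<forall>g\<in>I. 0 \<le> m g) \<and> \<beta> = (\<Sum>g\<in>I. m g *\<^sub>R g)"
proof -
  have fI: "finite I" using I finD finite_subset by blast
  obtain d where d: "\<beta> = (\<Sum>g\<in>I. d g *\<^sub>R g)" using b(2) span_finite[OF fI] by auto
  from decomp[OF b(1)] obtain m where m: "\<forall>g\<in>D. 0 \<le> m g" "\<beta> = (\<Sum>g\<in>D. m g *\<^sub>R g)" by blast
  have "(\<Sum>g\<in>D. (if g \<in> I then d g else 0) *\<^sub>R g) = (\<Sum>g\<in>D. if g \<in> I then d g *\<^sub>R g else 0)"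
    by (rule sum.cong) auto
  also have "\<dots> = (\<Sum>g\<in>I. d g *\<^sub>R g)" using finD I by (simp add: sum.inter_restrict[symmetric] Int_absorb1)
  finally have e: "(\<Sum>g\<in>D. (if g \<in> I then d g else 0) *\<^sub>R g) = \<beta>" using d by simp
  have "(\<Sum>g\<in>D. (m g - (if g \<in> I then d g else 0)) *\<^sub>R g) = 0"
    using e m by (simp add: scaleR_diff_left sum_subtractf)
  from indep[OF this] have mz: "\<forall>g\<in>D - I. m g = 0" by auto
  have "\<beta> = (\<Sum>g\<in>I. m g *\<^sub>R g)"
    unfolding m(2) using finD I mz by (intro sum.mono_neutral_right) auto
  then show ?thesis using m(1) I by auto
qed

lemma gen_R: "w \<in> gen_by (refl ` S) \<Longrightarrow> S \<subseteq> R \<Longrightarrow> \<beta> \<in> R \<Longrightarrow> w \<beta> \<in> R"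
  by (induction arbitrary: \<beta> rule: gen_by.induct) (auto intro: refl_in)

lemma refl_conj_refl: "g \<noteq> 0 \<Longrightarrow> refl g (refl b x) = refl (refl g b) (refl g x)"
  by (rule refl_conj) (auto simp: linear_refl refl_inner)

lemma refl_pos_gen: "\<beta> \<in> Rp \<Longrightarrow> refl \<beta> \<in> gen_by (refl ` D)"
proof (induction \<beta> rule: measure_induct_rule[where f="\<lambda>\<beta>. card {g\<in>R. g \<bullet> \<xi> < \<beta> \<bullet> \<xi>}"])
  case (less \<beta>)
  show ?case
  proof (cases "\<beta> \<in> D")
    case True then show ?thesis by (intro gen_single) auto
  next
    case False
    have bR: "\<beta> \<in> R" using less.prems by (auto simp: Rp_iff)
    from decomp[OF less.prems] obtain m where m: "\<forall>g\<in>D. 0 \<le> m g" "\<beta> = (\<Sum>g\<in>D. m g *\<^sub>R g)" by blast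
    have "0 < \<beta> \<bullet> \<beta>" using nz[OF bR] by simp
    also have "\<beta> \<bullet> \<beta> = (\<Sum>g\<in>D. m g * (g \<bullet> \<beta>))"
      by (subst (1) m(2)) (simp add: inner_sum_left)
    finally have pos: "0 < (\<Sum>g\<in>D. m g * (g \<bullet> \<beta>))" .
    have "\<exists>g\<in>D. m g * (g \<bullet> \<beta>) > 0"
    proof (rule ccontr)
      assume "\<not> ?thesis"
      then have "(\<Sum>g\<in>D. m g * (g \<bullet> \<beta>)) \<le> 0" by (intro sum_nonpos) (auto simp: not_less)
      with pos show False by simp
    qed
    then obtain g where g: "g \<in> D" "m g * (g \<bullet> \<beta>) > 0" by blast
    then have gb: "g \<bullet> \<beta> > 0" using m(1) by (auto simp: zero_less_mult_iff)
    have gR: "g \<in> R" using g D_R by auto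
    have gx: "g \<bullet> \<xi> > 0" using g D_Rp by (auto simp: Rp_iff)
    define n where "n = 2 * (\<beta> \<bullet> g) / (g \<bullet> g)"
    have n: "n > 0" using gb nz[OF gR] by (simp add: n_def inner_commute)
    define b' where "b' = refl g \<beta>"
    have b'R: "b' \<in> R" using refl_in[OF gR bR] by (simp add: b'_def)
    show ?thesis
    proof (cases "b' \<in> Rp")
      case True
      have "b' = \<beta> - n *\<^sub>R g" by (simp add: b'_def refl_def n_def)
      then have "b' \<bullet> \<xi> < \<beta> \<bullet> \<xi>" using n gx by (simp add: inner_diff_left)
      with b'R have "card {h\<in>R. h \<bullet> \<xi> < b' \<bullet> \<xi>} < card {h\<in>R. h \<bullet> \<xi> < \<beta> \<bullet> \<xi>}"
        by (rule card_less)
      with less.IH True have ih: "refl b' \<in> gen_by (refl ` D)" by blast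
      have "refl \<beta> = refl g \<circ> refl b' \<circ> refl g"
      proof
        fix x
        have "refl b' (refl g x) = refl g (refl \<beta> x)"
          using refl_conj_refl[OF nz[OF gR], of \<beta> x] by (simp add: b'_def)
        then show "refl \<beta> x = (refl g \<circ> refl b' \<circ> refl g) x"
          by (simp add: refl_refl[OF nz[OF gR]])
      qed
      moreover have "refl g \<in> gen_by (refl ` D)" using g by (intro gen_single) auto
      ultimately show ?thesis using ih by (metis gen_comp)
    next
      case False
      then obtain c where "\<beta> = c *\<^sub>R g" using refl_Rp[OF g(1) less.prems] by (auto simp: b'_def)
      moreover have "c \<noteq> 0" using nz[OF bR] calculation by auto
      ultimately have "refl \<beta> = refl g" by (simp add: refl_scaled)
      then show ?thesis using g by (auto intro: gen_single)
    qed
  qed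
qed

lemma refl_gen: "\<beta> \<in> R \<Longrightarrow> refl \<beta> \<in> gen_by (refl ` D)"
proof (cases "\<beta> \<in> Rp")
  case True then show ?thesis using refl_pos_gen by blast
next
  case False
  assume bR: "\<beta> \<in> R"
  have "refl \<beta> = refl ((-1) *\<^sub>R (- \<beta>))" by simp
  also have "\<dots> = refl (- \<beta>)" by (rule refl_scaled) simp
  finally show ?thesis using refl_pos_gen[OF neg_Rp[OF bR False]] by simp
qed

lemma weyl_eq: "weyl R = gen_by (refl ` D)"
proof
  show "weyl R \<subseteq> gen_by (refl ` D)"
  proof
    fix w assume "w \<in> weyl R"
    then show "w \<in> gen_by (refl ` D)" unfolding weyl_def
    proof (induction rule: gen_by.induct)
      case gen_id show ?case by (rule gen_by.gen_id)
    next
      case (gen_step g w)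
      then obtain b where b: "b \<in> R" "g = refl b" by auto
      then show ?case using gen_comp[OF refl_gen[OF b(1)] gen_step.IH] by metis
    qed
  qed
  show "gen_by (refl ` D) \<subseteq> weyl R" unfolding weyl_def using D_R by (intro gen_mono) auto
qed

lemma W_orth: "w \<in> weyl R \<Longrightarrow> orth w"
  unfolding weyl_def using gen_orth zero_notin by blast
lemma W_R: "w \<in> weyl R \<Longrightarrow> \<beta> \<in> R \<Longrightarrow> w \<beta> \<in> R"
  unfolding weyl_def using gen_R by blast
lemma W_inv: "w \<in> weyl R \<Longrightarrow> inv w \<in> weyl R \<and> inv w \<circ> w = id \<and> w \<circ> inv w = id"
  unfolding weyl_def using gen_inv_eq zero_notin by blast
lemma W_lin: "w \<in> weyl R \<Longrightarrow> linear w" using W_orth orth_def by blast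
lemma W_inner: "w \<in> weyl R \<Longrightarrow> w x \<bullet> w y = x \<bullet> y" using W_orth orth_def by blast
lemma W_comp: "a \<in> weyl R \<Longrightarrow> b \<in> weyl R \<Longrightarrow> a \<circ> b \<in> weyl R"
  unfolding weyl_def by (rule gen_comp)
lemma W_refl: "a \<in> R \<Longrightarrow> refl a \<in> weyl R"
  unfolding weyl_def by (intro gen_single) auto

end


context rs begin

abbreviation "len \<equiv> wlength R \<xi>"

lemma prodr_W: "set xs \<subseteq> D \<Longrightarrow> prodr xs \<in> weyl R"
  using prodr_gen weyl_eq by blast

lemma len_ex: "w \<in> weyl R \<Longrightarrow> \<exists>xs. length xs = len w \<and> set xs \<subseteq> D \<and> w = prodr xs"
proof -
  assume "w \<in> weyl R"
  then obtain xs where "set xs \<subseteq> D" "w = prodr xs" using gen_prodr weyl_eq by blast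
  then have "\<exists>n xs. length xs = n \<and> set xs \<subseteq> D \<and> w = foldr (\<lambda>\<alpha> f. refl \<alpha> \<circ> f) xs id"
    by (auto simp: prodr_def)
  from LeastI_ex[OF this] show ?thesis unfolding wlength_def prodr_def .
qed

lemma len_le: "set xs \<subseteq> D \<Longrightarrow> len (prodr xs) \<le> length xs"
  unfolding wlength_def prodr_def by (rule Least_le) auto

lemma del: "set xs \<subseteq> D \<Longrightarrow> a \<in> D \<Longrightarrow> prodr xs a \<bullet> \<xi> < 0 \<Longrightarrow>
  \<exists>ys. length ys + 1 = length xs \<and> set ys \<subseteq> D \<and> prodr xs \<circ> refl a = prodr ys"
proof (induction xs)
  case Nil then show ?case using D_pos[of a] by simp
next
  case (Cons x xs)
  have xD: "x \<in> D" and xsD: "set xs \<subseteq> D" using Cons.prems by auto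
  have aR: "a \<in> R" using Cons.prems D_R by auto
  have xR: "x \<in> R" using xD D_R by auto
  define \<beta> where "\<beta> = prodr xs a"
  have W: "prodr xs \<in> weyl R" using prodr_W[OF xsD] .
  have bR: "\<beta> \<in> R" using W_R[OF W aR] by (simp add: \<beta>_def)
  show ?case
  proof (cases "\<beta> \<bullet> \<xi> < 0")
    case True
    have "prodr xs a \<bullet> \<xi> < 0" using True by (simp add: \<beta>_def)
    from Cons.IH[OF xsD Cons.prems(2) this] obtain ys where ys: "length ys + 1 = length xs" "set ys \<subseteq> D"
      "prodr xs \<circ> refl a = prodr ys" by blast
    have e: "prodr (x # xs) \<circ> refl a = prodr (x # ys)" by (simp only: prodr_simps comp_assoc ys(3))
    have "length (x # ys) + 1 = length (x # xs)" "set (x # ys) \<subseteq> D" using ys xD by auto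
    with e show ?thesis by blast
  next
    case False
    then have bRp: "\<beta> \<in> Rp" using R_neg[OF bR] by simp
    have "refl x \<beta> \<bullet> \<xi> < 0" using Cons.prems by (simp add: \<beta>_def)
    then have "refl x \<beta> \<notin> Rp" by (simp add: Rp_iff)
    from refl_Rp[OF xD bRp this] obtain c where c: "\<beta> = c *\<^sub>R x" by blast
    have "c \<noteq> 0" using nz[OF bR] c by auto
    then have rb: "refl \<beta> = refl x" using c refl_scaled by simp
    have "prodr (x # xs) \<circ> refl a = prodr xs"
    proof
      fix y
      have "prodr xs (refl a y) = refl \<beta> (prodr xs y)"
        unfolding \<beta>_def using W_orth[OF W] by (intro refl_conj) (auto simp: orth_def)
      then show "(prodr (x # xs) \<circ> refl a) y = prodr xs y"
        by (simp add: rb refl_refl[OF nz[OF xR]])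
    qed
    moreover have "length xs + 1 = length (x # xs)" by simp
    ultimately show ?thesis using xsD by blast
  qed
qed

lemma L2: "u \<in> weyl R \<Longrightarrow> a \<in> D \<Longrightarrow> u a \<bullet> \<xi> < 0 \<Longrightarrow> len (u \<circ> refl a) < len u"
proof -
  assume u: "u \<in> weyl R" and a: "a \<in> D" and ua: "u a \<bullet> \<xi> < 0"
  obtain xs where xs: "length xs = len u" "set xs \<subseteq> D" "u = prodr xs" using len_ex[OF u] by blast
  from del[OF xs(2) a] ua xs obtain ys where ys: "length ys + 1 = length xs" "set ys \<subseteq> D"
    "prodr xs \<circ> refl a = prodr ys" by auto
  have "len (u \<circ> refl a) \<le> length ys" using len_le[OF ys(2)] ys(3) xs(3) by simp
  then show ?thesis using ys(1) xs(1) by simp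
qed

lemma L1: "w \<in> weyl R \<Longrightarrow> a \<in> D \<Longrightarrow> w a \<in> Rp \<Longrightarrow> len w < len (w \<circ> refl a)"
proof -
  assume w: "w \<in> weyl R" and a: "a \<in> D" and wa: "w a \<in> Rp"
  have aR: "a \<in> R" using a D_R by auto
  define u where "u = w \<circ> refl a"
  have u: "u \<in> weyl R" using W_comp[OF w W_refl[OF aR]] by (simp add: u_def)
  have "u a = - w a" using linear_neg[OF W_lin[OF w]] by (simp add: u_def refl_self[OF nz[OF aR]])
  then have "u a \<bullet> \<xi> < 0" using wa by (simp add: Rp_iff)
  from L2[OF u a this] have "len (u \<circ> refl a) < len u" .
  moreover have "u \<circ> refl a = w" by (auto simp: u_def refl_refl[OF nz[OF aR]])
  ultimately show ?thesis by (simp add: u_def)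
qed

lemma ST: assumes w: "w \<in> weyl R" and pos: "\<forall>\<beta>\<in>Rp. w \<beta> \<in> Rp" shows "w = id"
proof -
  obtain xs where xs: "length xs = len w" "set xs \<subseteq> D" "w = prodr xs" using len_ex[OF w] by blast
  show ?thesis
  proof (cases xs rule: rev_exhaust)
    case Nil then show ?thesis using xs by simp
  next
    case (snoc ys a)
    have a: "a \<in> D" and ysD: "set ys \<subseteq> D" using xs snoc by auto
    have aR: "a \<in> R" using a D_R by auto
    have wu: "w = prodr ys \<circ> refl a" using xs snoc by (simp add: prodr_append)
    have U: "prodr ys \<in> weyl R" using prodr_W[OF ysD] .
    show ?thesis
    proof (cases "prodr ys a \<bullet> \<xi> < 0")
      case True
      from del[OF ysD a True] obtain zs where zs: "length zs + 1 = length ys" "set zs \<subseteq> D"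
        "prodr ys \<circ> refl a = prodr zs" by auto
      have "len w \<le> length zs" using len_le[OF zs(2)] zs(3) wu by simp
      then show ?thesis using zs(1) xs(1) snoc by simp
    next
      case False
      have "prodr ys a \<in> R" using W_R[OF U aR] .
      then have "prodr ys a \<bullet> \<xi> > 0" using False regR by force
      moreover have "w a = - prodr ys a"
        using linear_neg[OF W_lin[OF U]] by (simp add: wu refl_self[OF nz[OF aR]])
      moreover have "w a \<in> Rp" using pos a D_Rp by auto
      ultimately show ?thesis by (simp add: Rp_iff)
    qed
  qed
qed

lemma len_inv: assumes w: "w \<in> weyl R" shows "len (inv w) \<le> len w"
proof -
  obtain xs where xs: "length xs = len w" "set xs \<subseteq> D" "w = prodr xs" using len_ex[OF w] by blast
  have "0 \<notin> set xs" using xs(2) D_R zero_notin by auto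
  then have r: "prodr (rev xs) \<circ> w = id" using prodr_rev xs by simp
  have "prodr (rev xs) = prodr (rev xs) \<circ> (w \<circ> inv w)" using W_inv[OF w] by simp
  also have "\<dots> = inv w" using r by (simp add: comp_assoc[symmetric])
  finally have "inv w = prodr (rev xs)" by simp
  then show ?thesis using len_le[of "rev xs"] xs by simp
qed

lemma finW: "finite (weyl R)"
proof (rule inj_on_finite)
  show "inj_on (\<lambda>w. restrict w R) (weyl R)"
  proof
    fix w1 w2 assume w: "w1 \<in> weyl R" "w2 \<in> weyl R" and eq: "restrict w1 R = restrict w2 R"
    have "w1 x = w2 x" for x
    proof (rule linear_eq_on_span[OF W_lin[OF w(1)] W_lin[OF w(2)]])
      show "x \<in> span R" using spanR by simp
      fix b assume "b \<in> R" then show "w1 b = w2 b" using eq by (metis restrict_apply')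
    qed
    then show "w1 = w2" by auto
  qed
  show "(\<lambda>w. restrict w R) ` weyl R \<subseteq> PiE R (\<lambda>_. R)" using W_R by auto
  show "finite (PiE R (\<lambda>_. R))" using finR by (intro finite_PiE) auto
qed

lemma longest_spec: assumes A: "A \<subseteq> weyl R" "A \<noteq> {}"
  shows "longest R \<xi> A \<in> A \<and> (\<forall>u\<in>A. len u \<le> len (longest R \<xi> A))"
proof -
  have fA: "finite A" using finW A finite_subset by blast
  define m where "m = Max (len ` A)"
  have "m \<in> len ` A" unfolding m_def using fA A by (intro Max_in) auto
  then obtain w where w: "w \<in> A" "len w = m" by auto
  have "\<forall>u\<in>A. len u \<le> len w" using w fA by (auto simp: m_def)
  with w have "\<exists>w. w \<in> A \<and> (\<forall>u\<in>A. len u \<le> len w)" by blast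
  from someI_ex[OF this] show ?thesis unfolding longest_def .
qed

end



lemma refl_swap: "a \<noteq> 0 \<Longrightarrow> refl a x \<bullet> y = x \<bullet> refl a y"
  using refl_inner[of a x "refl a y"] refl_refl[of a y] by simp

context rs begin

lemma weights_refl: assumes "\<mu> \<in> weights R" "a \<in> R" shows "refl a \<mu> \<in> weights R"
  unfolding weights_def
proof (intro CollectI ballI)
  fix \<beta> assume b: "\<beta> \<in> R"
  have a0: "a \<noteq> 0" using nz[OF assms(2)] .
  have "refl a \<mu> \<bullet> \<beta> = \<mu> \<bullet> refl a \<beta>" using refl_swap[OF a0] .
  moreover have "\<beta> \<bullet> \<beta> = refl a \<beta> \<bullet> refl a \<beta>" using refl_inner[OF a0] by simp
  moreover have "refl a \<beta> \<in> R" using refl_in[OF assms(2) b] .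
  ultimately show "2 * (refl a \<mu> \<bullet> \<beta>) / (\<beta> \<bullet> \<beta>) \<in> \<int>" using assms(1) by (simp add: weights_def)
qed

lemma weights_W: "w \<in> weyl R \<Longrightarrow> \<mu> \<in> weights R \<Longrightarrow> w \<mu> \<in> weights R"
  unfolding weyl_def
  by (induction arbitrary: \<mu> rule: gen_by.induct) (auto intro: weights_refl)

lemma weights_neg: "\<mu> \<in> weights R \<Longrightarrow> - \<mu> \<in> weights R"
  unfolding weights_def by (auto simp: minus_divide_left[symmetric])

lemma antidom_le: "x \<in> antidominant R \<xi> \<Longrightarrow> \<beta> \<in> Rp \<Longrightarrow> x \<bullet> \<beta> \<le> 0"
  by (auto simp: antidominant_def dominant_def)

lemma antidom_ex: "x \<in> weights R \<Longrightarrow> \<exists>w\<in>weyl R. w x \<in> antidominant R \<xi>"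
proof (induction x rule: measure_induct_rule[where f="\<lambda>x. card {\<beta>\<in>Rp. x \<bullet> \<beta> > 0}"])
  case (less x)
  show ?case
  proof (cases "{\<beta>\<in>Rp. x \<bullet> \<beta> > 0} = {}")
    case True
    then have "- x \<in> dominant R \<xi>" using weights_neg[OF less.prems]
      by (auto simp: dominant_def not_less)
    then have "x \<in> antidominant R \<xi>" unfolding antidominant_def by (metis image_eqI minus_minus)
    moreover have "id \<in> weyl R" unfolding weyl_def by (rule gen_by.gen_id)
    ultimately show ?thesis by (intro bexI[of _ id]) auto
  next
    case False
    then obtain \<beta> where b: "\<beta> \<in> Rp" "x \<bullet> \<beta> > 0" by auto
    from decomp[OF b(1)] obtain m where m: "\<forall>g\<in>D. 0 \<le> m g" "\<beta> = (\<Sum>g\<in>D. m g *\<^sub>R g)" by blast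
    have "\<exists>a\<in>D. x \<bullet> a > 0"
    proof (rule ccontr)
      assume "\<not> ?thesis"
      then have "(\<Sum>g\<in>D. m g * (x \<bullet> g)) \<le> 0" using m(1)
        by (intro sum_nonpos) (auto simp: not_less mult_nonneg_nonpos)
      moreover have "x \<bullet> \<beta> = (\<Sum>g\<in>D. m g * (x \<bullet> g))" by (subst m(2)) (simp add: inner_sum_right)
      ultimately show False using b by simp
    qed
    then obtain a where a: "a \<in> D" "x \<bullet> a > 0" by blast
    have aR: "a \<in> R" using a D_R by auto
    have a0: "a \<noteq> 0" using nz[OF aR] .
    define x' where "x' = refl a x"
    have x'w: "x' \<in> weights R" using weights_refl[OF less.prems aR] by (simp add: x'_def)
    have sub: "refl a ` {\<beta>\<in>Rp. x' \<bullet> \<beta> > 0} \<subseteq> {\<beta>\<in>Rp. x \<bullet> \<beta> > 0} - {a}"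
    proof
      fix y assume "y \<in> refl a ` {\<beta>\<in>Rp. x' \<bullet> \<beta> > 0}"
      then obtain \<beta> where \<beta>: "\<beta> \<in> Rp" "x' \<bullet> \<beta> > 0" "y = refl a \<beta>" by auto
      have xy: "x \<bullet> y > 0" using \<beta> refl_swap[OF a0, of x \<beta>] by (simp add: x'_def)
      have yRp: "y \<in> Rp"
      proof (rule ccontr)
        assume "y \<notin> Rp"
        with refl_Rp[OF a(1) \<beta>(1)] \<beta>(3) obtain c where c: "\<beta> = c *\<^sub>R a" by blast
        have "c * (a \<bullet> \<xi>) > 0" using \<beta>(1) c by (simp add: Rp_iff)
        then have "c > 0" using D_pos[OF a(1)] by (simp add: zero_less_mult_iff)
        have "y = - (c *\<^sub>R a)" using \<beta>(3) c by (simp add: refl_scale refl_self[OF a0])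
        then have "x \<bullet> y = - c * (x \<bullet> a)" by simp
        moreover have "c * (x \<bullet> a) > 0" using \<open>c > 0\<close> a(2) by simp
        ultimately show False using xy by simp
      qed
      have "y \<noteq> a"
      proof
        assume "y = a"
        then have "\<beta> = refl a a" using \<beta>(3) refl_refl[OF a0] by metis
        then have "\<beta> = - a" using refl_self[OF a0] by simp
        then show False using \<beta>(1) D_pos[OF a(1)] by (simp add: Rp_iff)
      qed
      show "y \<in> {\<beta>\<in>Rp. x \<bullet> \<beta> > 0} - {a}" using yRp xy \<open>y \<noteq> a\<close> by simp
    qed
    have inj: "inj_on (refl a) {\<beta>\<in>Rp. x' \<bullet> \<beta> > 0}"
      by (rule inj_onI) (metis refl_refl[OF a0])
    have fin: "finite {\<beta>\<in>Rp. x \<bullet> \<beta> > 0}" using finRp by simp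
    have "card {\<beta>\<in>Rp. x' \<bullet> \<beta> > 0} = card (refl a ` {\<beta>\<in>Rp. x' \<bullet> \<beta> > 0})"
      using card_image[OF inj] by simp
    also have "\<dots> \<le> card ({\<beta>\<in>Rp. x \<bullet> \<beta> > 0} - {a})" using sub fin by (intro card_mono) auto
    also have "\<dots> < card {\<beta>\<in>Rp. x \<bullet> \<beta> > 0}"
      using fin a D_Rp by (intro card_Diff1_less) auto
    finally have "card {\<beta>\<in>Rp. x' \<bullet> \<beta> > 0} < card {\<beta>\<in>Rp. x \<bullet> \<beta> > 0}" .
    with less.IH x'w obtain w where w: "w \<in> weyl R" "w x' \<in> antidominant R \<xi>" by blast
    have "w \<circ> refl a \<in> weyl R" using W_comp[OF w(1) W_refl[OF aR]] .
    moreover have "(w \<circ> refl a) x \<in> antidominant R \<xi>" using w(2) by (simp add: x'_def)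
    ultimately show ?thesis by blast
  qed
qed

lemma vmin_spec: assumes "\<mu> \<in> weights R"
  shows "vmin R \<xi> \<mu> \<in> weyl R \<and> vmin R \<xi> \<mu> \<mu> \<in> antidominant R \<xi> \<and>
     (\<forall>u\<in>weyl R. u \<mu> \<in> antidominant R \<xi> \<longrightarrow> len (vmin R \<xi> \<mu>) \<le> len u)"
proof -
  from antidom_ex[OF assms] obtain w where "w \<in> weyl R" "w \<mu> \<in> antidominant R \<xi>" by blast
  from ex_has_least_nat[of "\<lambda>v. v \<in> weyl R \<and> v \<mu> \<in> antidominant R \<xi>" w len, OF conjI[OF this]]
  have "\<exists>v. v \<in> weyl R \<and> v \<mu> \<in> antidominant R \<xi> \<and>
     (\<forall>u\<in>weyl R. u \<mu> \<in> antidominant R \<xi> \<longrightarrow> len v \<le> len u)" by blast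
  from someI_ex[OF this] show ?thesis unfolding vmin_def .
qed

end


context rs begin

lemma K1b: assumes mu: "\<mu> \<in> weights R" and g: "\<gamma> \<in> R"
  and c: "\<mu> \<bullet> \<gamma> < 0 \<or> (\<mu> \<bullet> \<gamma> = 0 \<and> \<gamma> \<in> Rp)"
  shows "vmin R \<xi> \<mu> \<gamma> \<in> Rp"
proof -
  define v where "v = vmin R \<xi> \<mu>"
  have v: "v \<in> weyl R" "v \<mu> \<in> antidominant R \<xi>"
    "\<And>u. u \<in> weyl R \<Longrightarrow> u \<mu> \<in> antidominant R \<xi> \<Longrightarrow> len v \<le> len u"
    using vmin_spec[OF mu] by (auto simp: v_def)
  have lin: "linear v" using W_lin[OF v(1)] .
  have le: "\<mu> \<bullet> d \<le> 0" if "d \<in> R" "v d \<in> Rp" for d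
    using antidom_le[OF v(2) that(2)] W_inner[OF v(1), of \<mu> d] by simp
  have vgR: "v \<gamma> \<in> R" using W_R[OF v(1) g] .
  have iv: "inv v \<in> weyl R" "inv v \<circ> v = id" "v \<circ> inv v = id" using W_inv[OF v(1)] by auto
  have ivlin: "linear (inv v)" using W_lin[OF iv(1)] .
  show ?thesis unfolding v_def[symmetric]
  proof (rule ccontr)
    assume ng: "v \<gamma> \<notin> Rp"
    define \<delta> where "\<delta> = - v \<gamma>"
    have dRp: "\<delta> \<in> Rp" using neg_Rp[OF vgR ng] by (simp add: \<delta>_def)
    have "\<delta> = v (- \<gamma>)" using linear_neg[OF lin] by (simp add: \<delta>_def)
    then have "\<mu> \<bullet> (- \<gamma>) \<le> 0" using le[of "- \<gamma>"] neg_in[OF g] dRp by simp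
    with c have c0: "\<mu> \<bullet> \<gamma> = 0" "\<gamma> \<in> Rp" by auto
    have vmd: "v \<mu> \<bullet> \<delta> = 0" using W_inner[OF v(1), of \<mu> \<gamma>] c0 by (simp add: \<delta>_def)
    from decomp[OF dRp] obtain m where m: "\<forall>g\<in>D. 0 \<le> m g" "\<delta> = (\<Sum>g\<in>D. m g *\<^sub>R g)" by blast
    have t0: "\<forall>a\<in>D. - (m a * (v \<mu> \<bullet> a)) = 0"
    proof -
      have e: "v \<mu> \<bullet> \<delta> = (\<Sum>a\<in>D. m a * (v \<mu> \<bullet> a))"
        unfolding m(2) by (simp add: inner_sum_right)
      have "(\<Sum>a\<in>D. - (m a * (v \<mu> \<bullet> a))) = - (v \<mu> \<bullet> \<delta>)"
        unfolding e by (simp only: sum_negf)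
      also have "\<dots> = 0" using vmd by simp
      finally have s: "(\<Sum>a\<in>D. - (m a * (v \<mu> \<bullet> a))) = 0" .
      have nn: "\<And>a. a \<in> D \<Longrightarrow> 0 \<le> - (m a * (v \<mu> \<bullet> a))"
        using m(1) antidom_le[OF v(2)] D_Rp by (auto intro!: mult_nonneg_nonpos)
      have "(\<Sum>a\<in>D. - (m a * (v \<mu> \<bullet> a))) = 0 \<longleftrightarrow> (\<forall>a\<in>D. - (m a * (v \<mu> \<bullet> a)) = 0)"
        by (rule sum_nonneg_eq_0_iff[OF finD nn])
      with s show ?thesis by simp
    qed
    have ivd: "inv v \<delta> = - \<gamma>"
      using linear_neg[OF ivlin, of "v \<gamma>"] fun_cong[OF iv(2), of \<gamma>] by (simp add: \<delta>_def)
    have "inv v \<delta> = (\<Sum>a\<in>D. m a *\<^sub>R inv v a)"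
      by (subst m(2)) (simp add: linear_sum[OF ivlin] linear_cmul[OF ivlin])
    then have "(\<Sum>a\<in>D. m a * (inv v a \<bullet> \<xi>)) = inv v \<delta> \<bullet> \<xi>" by (simp add: inner_sum_left)
    also have "\<dots> < 0" using ivd c0 by (simp add: Rp_iff)
    finally have sneg: "(\<Sum>a\<in>D. m a * (inv v a \<bullet> \<xi>)) < 0" .
    have "\<exists>a\<in>D. m a * (inv v a \<bullet> \<xi>) < 0"
    proof (rule ccontr)
      assume "\<not> ?thesis"
      then have "(\<Sum>a\<in>D. m a * (inv v a \<bullet> \<xi>)) \<ge> 0" by (intro sum_nonneg) (auto simp: not_less)
      with sneg show False by simp
    qed
    then obtain a where a: "a \<in> D" "m a * (inv v a \<bullet> \<xi>) < 0" by blast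
    have ma: "m a > 0" and iva: "inv v a \<bullet> \<xi> < 0"
      using a m(1) by (auto simp: mult_less_0_iff)
    have vma: "v \<mu> \<bullet> a = 0" using t0 a(1) ma by force
    have aR: "a \<in> R" using a D_R by auto
    define u where "u = refl a \<circ> v"
    have u: "u \<in> weyl R" using W_comp[OF W_refl[OF aR] v(1)] by (simp add: u_def)
    have "u \<mu> = v \<mu>" using vma by (simp add: u_def refl_def)
    then have "len v \<le> len u" using v(3)[OF u] v(2) by simp
    moreover have "len u < len v"
    proof -
      have iva': "inv v \<circ> refl a \<in> weyl R" using W_comp[OF iv(1) W_refl[OF aR]] .
      have rr: "\<And>x. refl a (refl a x) = x" using refl_refl[OF nz[OF aR]] by auto
      have ivv: "\<And>x. inv v (v x) = x" "\<And>x. v (inv v x) = x"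
        using iv(2,3) by (metis comp_apply id_apply)+
      have "(inv v \<circ> refl a) \<circ> u = id"
        by (rule ext) (simp add: u_def rr ivv)
      moreover have "u \<circ> (inv v \<circ> refl a) = id"
        by (rule ext) (simp add: u_def rr ivv)
      ultimately have "inv (inv v \<circ> refl a) = u" by (rule inv_unique_comp)
      then have "len u \<le> len (inv v \<circ> refl a)" using len_inv[OF iva'] by simp
      also have "\<dots> < len (inv v)" using L2[OF iv(1) a(1) iva] .
      also have "\<dots> \<le> len v" using len_inv[OF v(1)] .
      finally show ?thesis .
    qed
    ultimately show False by simp
  qed
qed

lemma K1a: assumes mu: "\<mu> \<in> weights R" and g: "\<gamma> \<in> R" and vg: "vmin R \<xi> \<mu> \<gamma> \<in> Rp"
  shows "\<mu> \<bullet> \<gamma> < 0 \<or> (\<mu> \<bullet> \<gamma> = 0 \<and> \<gamma> \<in> Rp)"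
proof -
  define v where "v = vmin R \<xi> \<mu>"
  have v: "v \<in> weyl R" "v \<mu> \<in> antidominant R \<xi>" using vmin_spec[OF mu] by (auto simp: v_def)
  have "v \<mu> \<bullet> v \<gamma> \<le> 0" using antidom_le[OF v(2)] vg by (simp add: v_def)
  then have le: "\<mu> \<bullet> \<gamma> \<le> 0" using W_inner[OF v(1), of \<mu> \<gamma>] by simp
  show ?thesis
  proof (rule ccontr)
    assume "\<not> ?thesis"
    with le have z: "\<mu> \<bullet> \<gamma> = 0" "\<gamma> \<notin> Rp" by auto
    have "- \<gamma> \<in> Rp" using neg_Rp[OF g z(2)] .
    then have "v (- \<gamma>) \<in> Rp" using K1b[OF mu neg_in[OF g]] z by (simp add: v_def)
    moreover have "v (- \<gamma>) = - v \<gamma>" using linear_neg[OF W_lin[OF v(1)]] by simp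
    ultimately show False using vg by (simp add: Rp_iff v_def)
  qed
qed

end


context rs begin

lemma P_W: "I \<subseteq> D \<Longrightarrow> parabolic I \<subseteq> weyl R"
  unfolding parabolic_def weyl_eq by (intro gen_mono) auto

lemma P_span: "w \<in> parabolic I \<Longrightarrow> w x - x \<in> span I"
  unfolding parabolic_def
proof (induction rule: gen_by.induct)
  case gen_id then show ?case by (simp add: span_zero)
next
  case (gen_step g w)
  then obtain a where a: "a \<in> I" "g = refl a" by auto
  have "refl a (w x) - w x \<in> span I"
    using a(1) by (simp add: refl_def span_neg span_scale span_base)
  then have "(refl a (w x) - w x) + (w x - x) \<in> span I" using gen_step.IH by (rule span_add)
  then show ?case using a by simp
qed

lemma P_span2: "w \<in> parabolic I \<Longrightarrow> x \<in> span I \<Longrightarrow> w x \<in> span I"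
  using P_span[of w I x] span_add[of "w x - x" I x] by simp

lemma P_pos: assumes I: "I \<subseteq> D" and w: "w \<in> parabolic I" and b: "\<beta> \<in> Rp" "\<beta> \<notin> span I"
  shows "w \<beta> \<in> Rp \<and> w \<beta> \<notin> span I"
  using w unfolding parabolic_def
proof (induction rule: gen_by.induct)
  case gen_id then show ?case using b by simp
next
  case (gen_step g w)
  then obtain a where a: "a \<in> I" "g = refl a" by auto
  have aD: "a \<in> D" using a I by auto
  have d: "refl a (w \<beta>) - w \<beta> \<in> span I"
    using a(1) by (simp add: refl_def span_neg span_scale span_base)
  have ns: "refl a (w \<beta>) \<notin> span I"
  proof
    assume "refl a (w \<beta>) \<in> span I"
    then have "refl a (w \<beta>) - (refl a (w \<beta>) - w \<beta>) \<in> span I" using d by (rule span_diff)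
    then show False using gen_step.IH by simp
  qed
  have "refl a (w \<beta>) \<in> Rp"
  proof (rule ccontr)
    assume "refl a (w \<beta>) \<notin> Rp"
    from refl_Rp[OF aD _ this] gen_step.IH obtain c where "w \<beta> = c *\<^sub>R a" by blast
    then have "w \<beta> \<in> span I" using a(1) by (simp add: span_scale span_base)
    then show False using gen_step.IH by simp
  qed
  then show ?case using ns a by simp
qed

lemma sign_lemma:
  assumes fI: "finite J" and m: "\<forall>g\<in>J. 0 \<le> m g" and b: "\<beta> = (\<Sum>g\<in>J. m g *\<^sub>R g)" "\<beta> \<noteq> 0"
    and lin: "linear w" and neg: "\<forall>g\<in>J. m g > 0 \<longrightarrow> w g \<bullet> \<xi> < 0"
  shows "w \<beta> \<bullet> \<xi> < 0"
proof -
  have e: "w \<beta> \<bullet> \<xi> = (\<Sum>g\<in>J. m g * (w g \<bullet> \<xi>))"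
    unfolding b(1) by (simp add: linear_sum[OF lin] linear_cmul[OF lin] inner_sum_left)
  have "\<exists>g0\<in>J. m g0 > 0"
  proof (rule ccontr)
    assume "\<not> ?thesis"
    then have "\<forall>g\<in>J. m g = 0" using m by force
    then have "\<beta> = 0" unfolding b(1) by simp
    then show False using b(2) by simp
  qed
  then obtain g0 where g0: "g0 \<in> J" "m g0 > 0" by blast
  have t: "m g * (w g \<bullet> \<xi>) \<le> 0" if "g \<in> J" for g
  proof (cases "m g > 0")
    case True then show ?thesis using neg that by (simp add: mult_pos_neg less_imp_le)
  next
    case False then have "m g = 0" using m that by force
    then show ?thesis by simp
  qed
  have "(\<Sum>g\<in>J. m g * (w g \<bullet> \<xi>)) = m g0 * (w g0 \<bullet> \<xi>) + (\<Sum>g\<in>J - {g0}. m g * (w g \<bullet> \<xi>))"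
    using fI g0(1) by (rule sum.remove)
  also have "\<dots> < 0"
  proof -
    have "m g0 * (w g0 \<bullet> \<xi>) < 0" using g0 neg by (simp add: mult_pos_neg)
    moreover have "(\<Sum>g\<in>J - {g0}. m g * (w g \<bullet> \<xi>)) \<le> 0" using t by (intro sum_nonpos) auto
    ultimately show ?thesis by simp
  qed
  finally show ?thesis using e by simp
qed

lemma main:
  assumes I: "I \<subseteq> D" and mu: "\<mu> \<in> dominant_I R \<xi> I"
  shows "lam_tilde R \<xi> k \<mu> =
    longest R \<xi> (stab_I I \<mu>)
      (\<mu> - longest R \<xi> (parabolic I)
             (inv (vmin R \<xi> (longest R \<xi> (parabolic I) \<mu>)) (rho R \<xi> k)))"
proof -
  define \<rho> where "\<rho> = rho R \<xi> k"
  define w0 where "w0 = longest R \<xi> (parabolic I)"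
  define z where "z = longest R \<xi> (stab_I I \<mu>)"
  define v where "v = vmin R \<xi> \<mu>"
  define v' where "v' = vmin R \<xi> (w0 \<mu>)"
  have fI: "finite I" using I finD finite_subset by blast
  have muw: "\<mu> \<in> weights R" using mu by (simp add: dominant_I_def)
  have muI: "\<And>a. a \<in> Rp \<Longrightarrow> a \<in> span I \<Longrightarrow> \<mu> \<bullet> a \<ge> 0"
    using mu by (auto simp: dominant_I_def pos_roots_I_def)
  have idP: "id \<in> parabolic I" unfolding parabolic_def by (rule gen_by.gen_id)
  have PW: "parabolic I \<subseteq> weyl R" using P_W[OF I] .
  have stP: "stab_I I \<mu> \<subseteq> parabolic I" by (auto simp: stab_I_def)
  have w0s: "w0 \<in> parabolic I" "\<And>u. u \<in> parabolic I \<Longrightarrow> len u \<le> len w0"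
    using longest_spec[OF PW] idP by (auto simp: w0_def)
  have zs: "z \<in> stab_I I \<mu>" "\<And>u. u \<in> stab_I I \<mu> \<Longrightarrow> len u \<le> len z"
  proof -
    have stW: "stab_I I \<mu> \<subseteq> weyl R" using stP PW by auto
    have ne: "stab_I I \<mu> \<noteq> {}" using idP by (auto simp: stab_I_def)
    from longest_spec[OF stW ne] show "z \<in> stab_I I \<mu>" "\<And>u. u \<in> stab_I I \<mu> \<Longrightarrow> len u \<le> len z"
      by (auto simp: z_def)
  qed
  have w0W: "w0 \<in> weyl R" using w0s PW by auto
  have zP: "z \<in> parabolic I" and zmu: "z \<mu> = \<mu>" using zs by (auto simp: stab_I_def)
  have zW: "z \<in> weyl R" using zP PW by auto
  have refl_P: "\<And>a. a \<in> I \<Longrightarrow> refl a \<in> parabolic I"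
    unfolding parabolic_def by (intro gen_single) auto
  have F2: "w0 a \<bullet> \<xi> < 0" if a: "a \<in> I" for a
  proof (rule ccontr)
    assume "\<not> w0 a \<bullet> \<xi> < 0"
    have aD: "a \<in> D" using a I by auto
    have "w0 a \<in> R" using W_R[OF w0W] aD D_R by auto
    then have "w0 a \<in> Rp" using \<open>\<not> w0 a \<bullet> \<xi> < 0\<close> R_neg by auto
    from L1[OF w0W aD this] have "len w0 < len (w0 \<circ> refl a)" .
    moreover have "w0 \<circ> refl a \<in> parabolic I"
      using w0s(1) refl_P[OF a] unfolding parabolic_def by (rule gen_comp)
    ultimately show False using w0s(2) by fastforce
  qed
  have F3: "w0 b \<bullet> \<xi> < 0" if b: "b \<in> Rp" "b \<in> span I" for b
  proof -
    from span_decomp[OF I b] obtain m where m: "\<forall>g\<in>I. 0 \<le> m g" "b = (\<Sum>g\<in>I. m g *\<^sub>R g)" by blast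
    have "b \<noteq> 0" using b nz by (auto simp: Rp_iff)
    then show ?thesis using sign_lemma[OF fI m(1) m(2) _ W_lin[OF w0W]] F2 by blast
  qed
  have F6: "z a \<bullet> \<xi> < 0" if a: "a \<in> I" "\<mu> \<bullet> a = 0" for a
  proof (rule ccontr)
    assume "\<not> z a \<bullet> \<xi> < 0"
    have aD: "a \<in> D" using a I by auto
    have "z a \<in> R" using W_R[OF zW] aD D_R by auto
    then have "z a \<in> Rp" using \<open>\<not> z a \<bullet> \<xi> < 0\<close> R_neg by auto
    from L1[OF zW aD this] have "len z < len (z \<circ> refl a)" .
    moreover have "z \<circ> refl a \<in> stab_I I \<mu>"
    proof -
      have "z \<circ> refl a \<in> parabolic I"
        using zP refl_P[OF a(1)] unfolding parabolic_def by (rule gen_comp)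
      moreover have "refl a \<mu> = \<mu>" using a(2) by (simp add: refl_def)
      ultimately show ?thesis using zmu by (simp add: stab_I_def)
    qed
    ultimately show False using zs(2) by fastforce
  qed
  have F7: "z e \<bullet> \<xi> < 0" if e: "e \<in> Rp" "e \<in> span I" "\<mu> \<bullet> e = 0" for e
  proof -
    from span_decomp[OF I e(1,2)] obtain m where m: "\<forall>g\<in>I. 0 \<le> m g" "e = (\<Sum>g\<in>I. m g *\<^sub>R g)" by blast
    have "e \<noteq> 0" using e nz by (auto simp: Rp_iff)
    have nn: "\<And>g. g \<in> I \<Longrightarrow> 0 \<le> m g * (\<mu> \<bullet> g)"
      using m(1) muI I D_Rp by (auto intro!: mult_nonneg_nonneg span_base)
    have "(\<Sum>g\<in>I. m g * (\<mu> \<bullet> g)) = \<mu> \<bullet> e" unfolding m(2) by (simp add: inner_sum_right)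
    then have "(\<Sum>g\<in>I. m g * (\<mu> \<bullet> g)) = 0" using e(3) by simp
    then have "\<forall>g\<in>I. m g * (\<mu> \<bullet> g) = 0" using sum_nonneg_eq_0_iff[OF fI nn] by simp
    then have "\<forall>g\<in>I. m g > 0 \<longrightarrow> z g \<bullet> \<xi> < 0" using F6 by auto
    then show ?thesis using sign_lemma[OF fI m(1) m(2) \<open>e \<noteq> 0\<close> W_lin[OF zW]] by blast
  qed
  have w0lin: "linear w0" using W_lin[OF w0W] .
  have zlin: "linear z" using W_lin[OF zW] .
  have F4: "w0 \<circ> w0 = id"
  proof (rule ST)
    show "w0 \<circ> w0 \<in> weyl R" using W_comp[OF w0W w0W] .
    show "\<forall>\<beta>\<in>Rp. (w0 \<circ> w0) \<beta> \<in> Rp"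
    proof
      fix b assume b: "b \<in> Rp"
      have bR: "b \<in> R" using b by (simp add: Rp_iff)
      show "(w0 \<circ> w0) b \<in> Rp"
      proof (cases "b \<in> span I")
        case True
        have wb: "w0 b \<in> R" using W_R[OF w0W bR] .
        have "- w0 b \<in> Rp" using F3[OF b True] neg_in[OF wb] by (simp add: Rp_iff)
        moreover have "- w0 b \<in> span I" using P_span2[OF w0s(1) True] by (rule span_neg)
        ultimately have "w0 (- w0 b) \<bullet> \<xi> < 0" by (rule F3)
        moreover have "w0 (- w0 b) = - w0 (w0 b)" using linear_neg[OF w0lin] by simp
        moreover have "w0 (w0 b) \<in> R" using W_R[OF w0W wb] .
        ultimately show ?thesis by (simp add: Rp_iff)
      next
        case False
        then have "w0 b \<in> Rp \<and> w0 b \<notin> span I" using P_pos[OF I w0s(1) b] by simp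
        then show ?thesis using P_pos[OF I w0s(1)] by simp
      qed
    qed
  qed
  have w0w0: "\<And>x. w0 (w0 x) = x" using F4 by (metis comp_apply id_apply)
  have w0mu: "w0 \<mu> \<in> weights R" using weights_W[OF w0W muw] .
  have vs: "v \<in> weyl R" using vmin_spec[OF muw] by (simp add: v_def)
  have v's: "v' \<in> weyl R" using vmin_spec[OF w0mu] by (simp add: v'_def)
  have iv': "inv v' \<in> weyl R" "v' \<circ> inv v' = id" using W_inv[OF v's] by auto
  define u where "u = z \<circ> w0 \<circ> inv v'"
  have uW: "u \<in> weyl R" unfolding u_def using W_comp[OF W_comp[OF zW w0W] iv'(1)] .
  have vu: "v \<circ> u = id"
  proof (rule ST)
    show "v \<circ> u \<in> weyl R" using W_comp[OF vs uW] .
    show "\<forall>\<beta>\<in>Rp. (v \<circ> u) \<beta> \<in> Rp"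
    proof
      fix b assume b: "b \<in> Rp"
      define d where "d = inv v' b"
      have dR: "d \<in> R" using W_R[OF iv'(1)] b by (simp add: d_def Rp_iff)
      have "v' d = b" using fun_cong[OF iv'(2), of b] by (simp add: d_def)
      then have "vmin R \<xi> (w0 \<mu>) d \<in> Rp" using b by (simp add: v'_def)
      from K1a[OF w0mu dR this] have K: "w0 \<mu> \<bullet> d < 0 \<or> (w0 \<mu> \<bullet> d = 0 \<and> d \<in> Rp)" .
      define g where "g = z (w0 d)"
      have w0dR: "w0 d \<in> R" using W_R[OF w0W dR] .
      have gR: "g \<in> R" using W_R[OF zW w0dR] by (simp add: g_def)
      have mug: "\<mu> \<bullet> g = w0 \<mu> \<bullet> d"
      proof -
        have "\<mu> \<bullet> g = z \<mu> \<bullet> z (w0 d)" using zmu by (simp add: g_def)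
        also have "\<dots> = \<mu> \<bullet> w0 d" using W_inner[OF zW] .
        also have "\<dots> = w0 \<mu> \<bullet> w0 (w0 d)" using W_inner[OF w0W] by simp
        also have "\<dots> = w0 \<mu> \<bullet> d" using w0w0 by simp
        finally show ?thesis .
      qed
      have "\<mu> \<bullet> g < 0 \<or> (\<mu> \<bullet> g = 0 \<and> g \<in> Rp)"
      proof (cases "w0 \<mu> \<bullet> d < 0")
        case True then show ?thesis using mug by simp
      next
        case False
        with K have d0: "w0 \<mu> \<bullet> d = 0" "d \<in> Rp" by auto
        have "g \<in> Rp"
        proof (cases "d \<in> span I")
          case True
          define e where "e = - w0 d"
          have eRp: "e \<in> Rp" using F3[OF d0(2) True] neg_in[OF w0dR] by (simp add: Rp_iff e_def)
          have eI: "e \<in> span I" using P_span2[OF w0s(1) True] by (simp add: e_def span_neg)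
          have "\<mu> \<bullet> e = - (\<mu> \<bullet> g)"
          proof -
            have "\<mu> \<bullet> w0 d = w0 \<mu> \<bullet> w0 (w0 d)" using W_inner[OF w0W] by simp
            then have "\<mu> \<bullet> w0 d = w0 \<mu> \<bullet> d" using w0w0 by simp
            then show ?thesis using mug by (simp add: e_def)
          qed
          then have "\<mu> \<bullet> e = 0" using mug d0 by simp
          from F7[OF eRp eI this] have "z e \<bullet> \<xi> < 0" .
          moreover have "z e = - g" using linear_neg[OF zlin] by (simp add: e_def g_def)
          ultimately show ?thesis using gR by (simp add: Rp_iff)
        next
          case False
          then have "w0 d \<in> Rp \<and> w0 d \<notin> span I" using P_pos[OF I w0s(1) d0(2)] by simp
          then show ?thesis using P_pos[OF I zP] by (simp add: g_def)
        qed
        then show ?thesis using mug d0 by simp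
      qed
      from K1b[OF muw gR this] have "v g \<in> Rp" by (simp add: v_def)
      then show "(v \<circ> u) b \<in> Rp" by (simp add: u_def g_def d_def)
    qed
  qed
  have iv: "inv v \<circ> v = id" using W_inv[OF vs] by auto
  have "inv v = inv v \<circ> (v \<circ> u)" using vu by simp
  also have "\<dots> = u" using iv by (simp add: comp_assoc[symmetric])
  finally have ivu: "inv v = u" .
  have "z (\<mu> - w0 (inv v' \<rho>)) = z \<mu> - z (w0 (inv v' \<rho>))" using linear_diff[OF zlin] .
  also have "\<dots> = \<mu> - inv v \<rho>" using zmu ivu by (simp add: u_def)
  finally show ?thesis
    by (simp add: lam_tilde_def v_def z_def w0_def v'_def \<rho>_def)
qed

end


theorem mainTheorem8:
  fixes R :: "'a::euclidean_space set" and \<xi> :: 'a and k :: "'a \<Rightarrow> real"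
    and I :: "'a set" and \<mu> :: 'a
  assumes "root_system R" and "regular R \<xi>" and "mult_fun R k"
    and "I \<subseteq> simple_roots R \<xi>"
    and "\<mu> \<in> dominant_I R \<xi> I"
  shows "lam_tilde R \<xi> k \<mu> =
    longest R \<xi> (stab_I I \<mu>)
      (\<mu> - longest R \<xi> (parabolic I)
             (inv (vmin R \<xi> (longest R \<xi> (parabolic I) \<mu>)) (rho R \<xi> k)))"
proof -
  interpret rs R \<xi> using assms(1,2) by unfold_locales
  show ?thesis using main[OF assms(4) assms(5)] .
qed

end
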